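(* Let $f:\mathbb{R}^n\to\mathbb{R}$ be differentiable and pseudo-convex, with $\nabla f$ $L$-Lipschitz continuous ($L>0$), and assume the stationary set $X^*$ is non-empty. Let $0<h<\frac{1}{L}$ and $\beta\in\left(\frac{1-\sqrt{1-h^2L^2}}{h^2L^2},1\right]$, and let $\{x^k\},\{z^k\}$ be generated by Algorithm 1 from an arbitrary $x^0\in\mathbb{R}^n$. Then for every $x^*\in X^*$ and every $k\ge 0$, $$\|x^{k+1}-x^*\|^2\le \|x^k-x^*\|^2-\kappa_1\|x^k-z^k\|^2,$$ where $\kappa_1=2\beta-1-\beta^2h^2L^2>0$.
   Context: A differentiable $f$ is pseudo-convex if $\nabla f$ is pseudo-monotone, i.e. for all $x,y$, $\langle \nabla f(x),y-x\rangle\ge 0$ implies $\langle \nabla f(y),y-x\rangle\ge0$. The stationary set is $X^*=\{x\in\mathbb{R}^n:\nabla f(x)=0\}$. Algorithm 1: given $x^0$, for $k=0,1,2,\dots$ set $z^k=x^k-h\nabla f(x^k)$ and $x^{k+1}=x^k-h\big(\nabla f(x^k)-\beta(\nabla f(x^k)-\nabla f(z^k))\big)$. *)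

theory Defs
  imports "HOL-Analysis.Analysis"
begin

definition has_gradient_everywhere :: "('a::euclidean_space \<Rightarrow> real) \<Rightarrow> ('a \<Rightarrow> 'a) \<Rightarrow> bool" where
  "has_gradient_everywhere f grad \<longleftrightarrow> (\<forall>x. (f has_derivative (\<lambda>v. grad x \<bullet> v)) (at x))"

definition pseudo_monotone :: "('a::real_inner \<Rightarrow> 'a) \<Rightarrow> bool" where
  "pseudo_monotone F \<longleftrightarrow> (\<forall>x y. F x \<bullet> (y - x) \<ge> 0 \<longrightarrow> F y \<bullet> (y - x) \<ge> 0)"

definition pseudo_convex :: "('a::euclidean_space \<Rightarrow> real) \<Rightarrow> ('a \<Rightarrow> 'a) \<Rightarrow> bool" where
  "pseudo_convex f grad \<longleftrightarrow> has_gradient_everywhere f grad \<and> pseudo_monotone grad"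

definition stationary_set :: "('a \<Rightarrow> 'a::real_vector) \<Rightarrow> 'a set" where
  "stationary_set grad = {x. grad x = 0}"

end

theory Submission
  imports Defs
begin

lemma key:
  fixes d r q :: "'a::real_inner" and \<beta> c :: real
  assumes "inner q (d - r) \<ge> 0" "inner r d \<ge> 0" "norm (r - q)^2 \<le> c * norm r ^2"
    "0 \<le> \<beta>" "\<beta> \<le> 1"
  shows "norm (d - r + \<beta> *\<^sub>R (r - q))^2 \<le> norm d ^2 - (2*\<beta> - 1 - \<beta>^2 * c) * norm r^2"
proof -
  have e1: "norm (d - r + \<beta> *\<^sub>R (r - q))^2 = norm (d - r)^2 + 2*\<beta> * inner (r - q) (d - r) + \<beta>^2 * norm (r - q)^2"
    unfolding power2_norm_eq_inner by (simp add: inner_simps algebra_simps power2_eq_square inner_commute)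
  have e2: "norm (d - r)^2 = norm d^2 - 2 * inner r d + norm r^2"
    unfolding power2_norm_eq_inner by (simp add: inner_simps algebra_simps inner_commute)
  have e3: "inner (r - q) (d - r) = inner r d - norm r^2 - inner q (d - r)"
    unfolding power2_norm_eq_inner by (simp add: inner_simps algebra_simps inner_commute)
  have "\<beta> * inner q (d - r) \<ge> 0" using assms by simp
  moreover have "(1 - \<beta>) * inner r d \<ge> 0" using assms by simp
  moreover have "\<beta>^2 * norm (r - q)^2 \<le> \<beta>^2 * (c * norm r^2)"
    using assms by (intro mult_left_mono) auto
  ultimately show ?thesis unfolding e1 e2 e3 by (simp add: algebra_simps)
qed

theorem proposition1:
  fixes f :: "real^'n \<Rightarrow> real" and grad :: "real^'n \<Rightarrow> real^'n"
    and L h \<beta> :: real and x z :: "nat \<Rightarrow> real^'n"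
  assumes grad: "has_gradient_everywhere f grad"
    and pc: "pseudo_convex f grad"
    and L_pos: "L > 0"
    and lip: "\<And>u v. norm (grad u - grad v) \<le> L * norm (u - v)"
    and nonempty: "stationary_set grad \<noteq> {}"
    and h_pos: "0 < h" and h_lt: "h < 1 / L"
    and beta_lo: "(1 - sqrt (1 - h^2 * L^2)) / (h^2 * L^2) < \<beta>" and beta_hi: "\<beta> \<le> 1"
    and z_def: "\<And>k. z k = x k - h *\<^sub>R grad (x k)"
    and x_rec: "\<And>k. x (Suc k) = x k - h *\<^sub>R (grad (x k) - \<beta> *\<^sub>R (grad (x k) - grad (z k)))"
  shows "2 * \<beta> - 1 - \<beta>^2 * h^2 * L^2 > 0 \<and>
    (\<forall>xs \<in> stationary_set grad. \<forall>k.
      (norm (x (Suc k) - xs))^2 \<le> (norm (x k - xs))^2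
        - (2 * \<beta> - 1 - \<beta>^2 * h^2 * L^2) * (norm (x k - z k))^2)"
proof -
  define a where "a = h^2 * L^2"
  have hL: "h * L < 1" using h_lt L_pos by (simp add: field_simps)
  have a0: "0 < a" and a1: "a < 1" unfolding a_def using hL h_pos L_pos
    by (auto simp: power_mult_distrib[symmetric] power_less_one_iff)
  define s where "s = sqrt (1 - a)"
  have s0: "0 < s" and s1: "s < 1" and ss: "s^2 = 1 - a" unfolding s_def using a0 a1 by auto
  have blo: "(1 - s) / a < \<beta>" using beta_lo unfolding s_def a_def .
  hence blo': "1 - s < a * \<beta>" using a0 by (simp add: field_simps)
  have b0: "0 \<le> \<beta>" using blo s1 a0 by (smt (verit) divide_pos_pos)
  have "a * \<beta> \<le> a" using beta_hi a0 by simp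
  have "1 + s > a" using s0 a1 by simp
  have kpos: "2 * \<beta> - 1 - \<beta>^2 * a > 0"
  proof -
    have "a * (2 * \<beta> - 1 - \<beta>^2 * a) = (a*\<beta> - (1 - s)) * ((1 + s) - a*\<beta>)"
      using ss by (simp add: algebra_simps power2_eq_square)
    also have "\<dots> > 0" using blo' \<open>a * \<beta> \<le> a\<close> \<open>1 + s > a\<close> by simp
    finally show ?thesis using a0 by (simp add: zero_less_mult_iff)
  qed
  have pm: "pseudo_monotone grad" using pc unfolding pseudo_convex_def by simp
  show ?thesis
  proof (intro conjI ballI allI)
    show "2 * \<beta> - 1 - \<beta>^2 * h^2 * L^2 > 0" using kpos unfolding a_def by (simp add: algebra_simps)
  next
    fix xs k assume "xs \<in> stationary_set grad"
    hence g0: "grad xs = 0" by (simp add: stationary_set_def)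
    define d where "d = x k - xs"
    define r where "r = h *\<^sub>R grad (x k)"
    define q where "q = h *\<^sub>R grad (z k)"
    have zr: "z k - xs = d - r" unfolding d_def r_def z_def by simp
    have "grad (z k) \<bullet> (z k - xs) \<ge> 0"
      using pm g0 unfolding pseudo_monotone_def by (metis inner_zero_left order_refl)
    hence c1: "inner q (d - r) \<ge> 0" unfolding q_def zr[symmetric] using h_pos by simp
    have "grad (x k) \<bullet> (x k - xs) \<ge> 0"
      using pm g0 unfolding pseudo_monotone_def by (metis inner_zero_left order_refl)
    hence c2: "inner r d \<ge> 0" unfolding r_def d_def using h_pos by simp
    have xz: "x k - z k = r" unfolding z_def r_def by simp
    have "norm (r - q) = h * norm (grad (x k) - grad (z k))"
      unfolding r_def q_def using h_pos by (simp add: scaleR_diff_right[symmetric])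
    also have "\<dots> \<le> h * (L * norm r)" using lip[of "x k" "z k"] h_pos xz by simp
    finally have "norm (r - q) \<le> h * L * norm r" by simp
    hence "norm (r - q)^2 \<le> (h * L * norm r)^2" by (intro power_mono) auto
    hence c3: "norm (r - q)^2 \<le> a * norm r^2" unfolding a_def by (simp add: power_mult_distrib)
    have xs1: "x (Suc k) - xs = d - r + \<beta> *\<^sub>R (r - q)"
      unfolding x_rec d_def r_def q_def by (simp add: algebra_simps)
    show "(norm (x (Suc k) - xs))^2 \<le> (norm (x k - xs))^2
        - (2 * \<beta> - 1 - \<beta>^2 * h^2 * L^2) * (norm (x k - z k))^2"
      using key[OF c1 c2 c3 b0 beta_hi] unfolding xs1 xz d_def[symmetric] a_def
      by (simp add: algebra_simps)
  qed
qed

end
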